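(* Let $m,n$ be even positive integers and let $\mathcal{X}_0,\mathcal{X}_1\subseteq\{0,1\}^{2mn}$ be as in the context. There exists a real multilinear polynomial $p$ in $2mn$ variables of degree $\min(n/2,m/2)+1$ such that $p(x)\neq 0$ for all $x\in\mathcal{X}_1$ and $p(x)=0$ for all $x\in\mathcal{X}_0$. More precisely, there is such a polynomial of degree $n/2+1$ (with $p>0$ on $\mathcal{X}_1$) and there is such a polynomial of degree $m/2+1$ (with $p=n/2$ on $\mathcal{X}_1$).
   Context: For $z\in\{0,1\}^k$ let $w(z)$ denote its Hamming weight. Let $\mathcal{A}_1=\{0^m y : y\in\{0,1\}^m,\ m/2\le w(y)\le m\}$ and $\mathcal{A}_0=\{y0^m : y\in\{0,1\}^m,\ m/2\le w(y)\le m\}$ (subsets of $\{0,1\}^{2m}$). A string $x\in\{0,1\}^{2mn}$ is viewed as $n$ consecutive blocks of $2m$ bits, each block being $x^{(0,i)}x^{(1,i)}$ with $x^{(0,i)},x^{(1,i)}\in\{0,1\}^m$, $i=1,\dots,n$. Define $\mathcal{X}_1=\mathcal{A}_0\times\cdots\times\mathcal{A}_0$ ($n$ factors) and $\mathcal{X}_0=\bigcup\{\mathcal{A}_{y_1}\times\cdots\times\mathcal{A}_{y_n} : y\in\{0,1\}^n,\ w(y)=n/2\}$. A multilinear polynomial is $p(x)=\sum_{S\subseteq[N]}a_S\prod_{i\in S}x_i$ with real $a_S$; its degree is $\max\{|S|: a_S\neq 0\}$. *)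

theory Defs
  imports Complex_Main
begin

text \<open>Bit strings in {0,1}^k are Boolean lists of length k; True = 1.\<close>

definition hw :: "bool list \<Rightarrow> nat" where
  "hw z = count_list z True"

definition A_set :: "nat \<Rightarrow> bool \<Rightarrow> bool list set" where
  "A_set m b = {(if b then replicate m False @ y else y @ replicate m False) | y.
      length y = m \<and> real m / 2 \<le> real (hw y) \<and> hw y \<le> m}"

text \<open>Product A_{y_1} x ... x A_{y_n} as concatenations of n blocks of 2m bits.\<close>
definition prod_blocks :: "nat \<Rightarrow> nat \<Rightarrow> (nat \<Rightarrow> bool) \<Rightarrow> bool list set" where
  "prod_blocks m n y = {concat bs | bs. length bs = n \<and> (\<forall>i<n. bs ! i \<in> A_set m (y i))}"

definition X1 :: "nat \<Rightarrow> nat \<Rightarrow> bool list set" where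
  "X1 m n = prod_blocks m n (\<lambda>_. False)"

text \<open>y ranges over {0,1}^n, i.e. functions on {0..<n} (values outside irrelevant).\<close>
definition X0 :: "nat \<Rightarrow> nat \<Rightarrow> bool list set" where
  "X0 m n = (\<Union>{prod_blocks m n y | y. card {i. i < n \<and> y i} * 2 = n})"

text \<open>Multilinear polynomial in N variables x_0..x_{N-1}: coefficient a_S for S \<subseteq> {0..<N}.\<close>
definition ml_eval :: "nat \<Rightarrow> (nat set \<Rightarrow> real) \<Rightarrow> bool list \<Rightarrow> real" where
  "ml_eval N a x = (\<Sum>S\<in>Pow {..<N}. a S * (\<Prod>i\<in>S. (if x ! i then 1 else 0)))"

definition ml_degree :: "nat \<Rightarrow> (nat set \<Rightarrow> real) \<Rightarrow> nat" where
  "ml_degree N a = Max {card S | S. S \<subseteq> {..<N} \<and> a S \<noteq> 0}"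

end

theory Submission
  imports Defs
begin

definition mon :: "nat set \<Rightarrow> bool list \<Rightarrow> real" where
  "mon S x = (\<Prod>i\<in>S. (if x!i then 1 else 0))"

lemma mon_eq: "finite S \<Longrightarrow> mon S x = (if \<forall>i\<in>S. x!i then 1 else 0)"
  unfolding mon_def by (auto simp: prod_zero_iff)

lemma mon_mult: "finite S \<Longrightarrow> finite T \<Longrightarrow> mon S x * mon T x = mon (S \<union> T) x"
  by (auto simp: mon_eq)

lemma ml_eval_mon: "ml_eval N a x = (\<Sum>S\<in>Pow {..<N}. a S * mon S x)"
  unfolding ml_eval_def mon_def ..

lemma ml_eval_single: "ml_eval N (\<lambda>S. if S = T then c else 0) x = (if T \<subseteq> {..<N} then c * mon T x else 0)"
proof -
  have "ml_eval N (\<lambda>S. if S = T then c else 0) x = (\<Sum>S\<in>Pow {..<N}. if S = T then c * mon S x else 0)"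
    unfolding ml_eval_mon by (rule sum.cong) auto
  also have "\<dots> = (if T \<subseteq> {..<N} then c * mon T x else 0)"
    by (subst sum.delta) auto
  finally show ?thesis .
qed

definition rep :: "nat \<Rightarrow> nat \<Rightarrow> (bool list \<Rightarrow> real) \<Rightarrow> bool" where
  "rep N d f \<longleftrightarrow> (\<exists>a. (\<forall>S. S \<subseteq> {..<N} \<longrightarrow> a S \<noteq> 0 \<longrightarrow> card S \<le> d) \<and> (\<forall>x. ml_eval N a x = f x))"

lemma repE:
  assumes "rep N d f"
  obtains a where "\<forall>S. S \<subseteq> {..<N} \<longrightarrow> a S \<noteq> 0 \<longrightarrow> card S \<le> d" "\<forall>x. ml_eval N a x = f x"
  using assms unfolding rep_def by (elim exE conjE) 

lemma rep_const: "rep N d (\<lambda>x. c)"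
proof -
  have "ml_eval N (\<lambda>S. if S = {} then c else 0) x = c" for x
    unfolding ml_eval_single by (simp add: mon_def)
  then show ?thesis unfolding rep_def
    by (rule_tac x="\<lambda>S. if S = {} then c else 0" in exI) auto
qed

lemma rep_var: "i < N \<Longrightarrow> rep N 1 (\<lambda>x. if x!i then 1 else 0)"
proof -
  assume i: "i < N"
  have "ml_eval N (\<lambda>S. if S = {i} then 1 else 0) x = (if x!i then 1 else 0)" for x
    unfolding ml_eval_single using i by (simp add: mon_def)
  then show ?thesis unfolding rep_def
    by (rule_tac x="\<lambda>S. if S = {i} then 1 else 0" in exI) auto
qed

lemma rep_mono: "rep N d f \<Longrightarrow> d \<le> e \<Longrightarrow> rep N e f"
  unfolding rep_def by (meson order_trans)

lemma rep_add: "rep N d f \<Longrightarrow> rep N d g \<Longrightarrow> rep N d (\<lambda>x. f x + g x)"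
proof -
  assume "rep N d f" "rep N d g"
  then obtain a b where a1: "\<forall>S. S \<subseteq> {..<N} \<longrightarrow> a S \<noteq> 0 \<longrightarrow> card S \<le> d" and a2: "\<forall>x. ml_eval N a x = f x"
    and b1: "\<forall>S. S \<subseteq> {..<N} \<longrightarrow> b S \<noteq> 0 \<longrightarrow> card S \<le> d" and b2: "\<forall>x. ml_eval N b x = g x"
    by (elim repE)
  have e: "ml_eval N (\<lambda>S. a S + b S) x = f x + g x" for x
  proof -
    have "ml_eval N (\<lambda>S. a S + b S) x = ml_eval N a x + ml_eval N b x"
      unfolding ml_eval_mon by (simp add: distrib_right sum.distrib)
    then show ?thesis using a2 b2 by simp
  qed
  have c: "\<forall>S. S \<subseteq> {..<N} \<longrightarrow> a S + b S \<noteq> 0 \<longrightarrow> card S \<le> d"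
  proof (intro allI impI)
    fix S assume S: "S \<subseteq> {..<N}" "a S + b S \<noteq> 0"
    then have "a S \<noteq> 0 \<or> b S \<noteq> 0" by auto
    then show "card S \<le> d" using a1 b1 S(1) by blast
  qed
  show ?thesis unfolding rep_def
    by (rule exI[of _ "\<lambda>S. a S + b S"]) (use c e in simp)
qed

lemma rep_scale: "rep N d f \<Longrightarrow> rep N d (\<lambda>x. c * f x)"
proof -
  assume "rep N d f"
  then obtain a where a1: "\<forall>S. S \<subseteq> {..<N} \<longrightarrow> a S \<noteq> 0 \<longrightarrow> card S \<le> d" and a2: "\<forall>x. ml_eval N a x = f x"
    by (elim repE)
  have e: "ml_eval N (\<lambda>S. c * a S) x = c * f x" for x
  proof -
    have "ml_eval N (\<lambda>S. c * a S) x = c * ml_eval N a x"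
      unfolding ml_eval_mon by (simp add: sum_distrib_left mult.assoc)
    then show ?thesis using a2 by simp
  qed
  have cc: "\<forall>S. S \<subseteq> {..<N} \<longrightarrow> c * a S \<noteq> 0 \<longrightarrow> card S \<le> d"
    using a1 by simp
  show ?thesis unfolding rep_def
    by (rule exI[of _ "\<lambda>S. c * a S"]) (use cc e in simp)
qed

lemma rep_mult: "rep N d f \<Longrightarrow> rep N e g \<Longrightarrow> rep N (d + e) (\<lambda>x. f x * g x)"
proof -
  assume "rep N d f" "rep N e g"
  then obtain a b where a: "\<forall>S. S \<subseteq> {..<N} \<longrightarrow> a S \<noteq> 0 \<longrightarrow> card S \<le> d" "\<forall>x. ml_eval N a x = f x"
    and b: "\<forall>S. S \<subseteq> {..<N} \<longrightarrow> b S \<noteq> 0 \<longrightarrow> card S \<le> e" "\<forall>x. ml_eval N b x = g x"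
    by (elim repE)
  define P where "P = Pow {..<N}"
  have fP: "finite P" unfolding P_def by simp
  define c where "c U = (\<Sum>p\<in>{p. p \<in> P \<times> P \<and> fst p \<union> snd p = U}. a (fst p) * b (snd p))" for U
  have "ml_eval N c x = f x * g x" for x
  proof -
    have "f x * g x = (\<Sum>S\<in>P. a S * mon S x) * (\<Sum>T\<in>P. b T * mon T x)"
      using a(2) b(2) unfolding ml_eval_mon P_def by metis
    also have "\<dots> = (\<Sum>S\<in>P. \<Sum>T\<in>P. (a S * mon S x) * (b T * mon T x))"
      by (rule sum_product)
    also have "\<dots> = (\<Sum>p\<in>P \<times> P. a (fst p) * b (snd p) * mon (fst p \<union> snd p) x)"
      unfolding sum.cartesian_product
    proof (rule sum.cong)
      fix p assume "p \<in> P \<times> P"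
      then have fin: "finite (fst p)" "finite (snd p)" by (auto simp: P_def dest: finite_subset[OF _ finite_lessThan])
      have "(case p of (S, T) \<Rightarrow> a S * mon S x * (b T * mon T x))
          = a (fst p) * b (snd p) * (mon (fst p) x * mon (snd p) x)"
        by (cases p) (simp add: ac_simps)
      also have "\<dots> = a (fst p) * b (snd p) * mon (fst p \<union> snd p) x"
        using mon_mult[OF fin, of x] by simp
      finally show "(case p of (S, T) \<Rightarrow> a S * mon S x * (b T * mon T x))
          = a (fst p) * b (snd p) * mon (fst p \<union> snd p) x" .
    qed simp
    also have "\<dots> = (\<Sum>U\<in>P. \<Sum>p\<in>{p. p \<in> P \<times> P \<and> fst p \<union> snd p = U}. a (fst p) * b (snd p) * mon (fst p \<union> snd p) x)"
      by (rule sum.group[symmetric]) (auto simp: fP P_def)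
    also have "\<dots> = (\<Sum>U\<in>P. c U * mon U x)"
      unfolding c_def sum_distrib_right by (rule sum.cong) auto
    finally show ?thesis unfolding ml_eval_mon P_def by simp
  qed
  moreover have "\<forall>U. U \<subseteq> {..<N} \<longrightarrow> c U \<noteq> 0 \<longrightarrow> card U \<le> d + e"
  proof (intro allI impI)
    fix U assume U: "U \<subseteq> {..<N}" "c U \<noteq> 0"
    then obtain p where p: "p \<in> P \<times> P" "fst p \<union> snd p = U" "a (fst p) * b (snd p) \<noteq> 0"
      unfolding c_def using sum.not_neutral_contains_not_neutral by (smt (verit) mem_Collect_eq)
    have "card U \<le> card (fst p) + card (snd p)" using p(2) by (metis card_Un_le)
    also have "\<dots> \<le> d + e" using p a b unfolding P_def by (auto intro!: add_mono)
    finally show "card U \<le> d + e" .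
  qed
  ultimately show ?thesis unfolding rep_def by (intro exI[of _ c]) simp
qed

lemma rep_prod: "finite I \<Longrightarrow> (\<And>i. i \<in> I \<Longrightarrow> rep N d (f i)) \<Longrightarrow> rep N (d * card I) (\<lambda>x. \<Prod>i\<in>I. f i x)"
proof (induction I rule: finite_induct)
  case empty then show ?case by (simp add: rep_const)
next
  case (insert j I)
  then have "rep N (d + d * card I) (\<lambda>x. f j x * (\<Prod>i\<in>I. f i x))"
    by (intro rep_mult) auto
  then show ?case using insert by simp
qed

lemma rep_sum: "finite I \<Longrightarrow> (\<And>i. i \<in> I \<Longrightarrow> rep N d (f i)) \<Longrightarrow> rep N d (\<lambda>x. \<Sum>i\<in>I. f i x)"
proof (induction I rule: finite_induct)
  case empty then show ?case by (simp add: rep_const)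
next
  case (insert j I)
  then have "rep N d (\<lambda>x. f j x + (\<Sum>i\<in>I. f i x))"
    by (intro rep_add) auto
  then show ?case using insert by simp
qed


definition bitv :: "bool list \<Rightarrow> nat \<Rightarrow> real" where
  "bitv x k = (if x!k then 1 else 0)"

definition wv :: "nat \<Rightarrow> nat \<Rightarrow> bool list \<Rightarrow> real" where
  "wv m i x = (\<Sum>j<m. bitv x (2*m*i + j))"

lemma count_sum: "length l = m \<Longrightarrow> (\<Sum>j<m. bitv l j) = real (hw l)"
proof (induction l arbitrary: m)
  case Nil then show ?case by (simp add: hw_def)
next
  case (Cons a l)
  then obtain m' where m: "m = Suc m'" "length l = m'" by auto
  have "(\<Sum>j<m. bitv (a#l) j) = bitv (a#l) 0 + (\<Sum>j<m'. bitv (a#l) (Suc j))"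
    unfolding m by (rule sum.lessThan_Suc_shift)
  also have "\<dots> = (if a then 1 else 0) + real (hw l)"
    using Cons.IH[OF m(2)] by (simp add: bitv_def)
  finally show ?case by (simp add: hw_def)
qed

lemma concat_nth_block:
  "\<forall>b\<in>set bs. length b = k \<Longrightarrow> i < length bs \<Longrightarrow> j < k \<Longrightarrow> concat bs ! (k*i + j) = bs!i!j"
proof (induction bs arbitrary: i)
  case Nil then show ?case by simp
next
  case (Cons b bs)
  show ?case
  proof (cases i)
    case 0 then show ?thesis using Cons.prems by (simp add: nth_append)
  next
    case (Suc i')
    have "k*i + j = k + (k*i' + j)" using Suc by simp
    then show ?thesis using Cons.prems Cons.IH[of i'] Suc by (simp add: nth_append)
  qed
qed

lemma A_set_len: "b \<in> A_set m t \<Longrightarrow> length b = 2*m"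
  unfolding A_set_def by auto

lemma prod_blocksE:
  assumes "x \<in> prod_blocks m n y"
  obtains bs where "x = concat bs" "length bs = n" "\<forall>i<n. bs!i \<in> A_set m (y i)"
    "\<forall>b\<in>set bs. length b = 2*m"
proof -
  obtain bs where bs: "x = concat bs" "length bs = n" "\<forall>i<n. bs!i \<in> A_set m (y i)"
    using assms unfolding prod_blocks_def by blast
  have "\<forall>b\<in>set bs. length b = 2*m"
    using bs(2,3) A_set_len by (metis in_set_conv_nth)
  with bs that show ?thesis by blast
qed

lemma block_w:
  assumes "x \<in> prod_blocks m n y" "i < n"
  shows "y i \<Longrightarrow> wv m i x = 0"
    and "\<not> y i \<Longrightarrow> \<exists>k::nat. wv m i x = real k \<and> real m / 2 \<le> real k \<and> k \<le> m"
proof -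
  obtain bs where bs: "x = concat bs" "length bs = n" "\<forall>i<n. bs!i \<in> A_set m (y i)"
    "\<forall>b\<in>set bs. length b = 2*m"
    using assms(1) by (rule prod_blocksE)
  obtain yy where yy: "bs!i = (if y i then replicate m False @ yy else yy @ replicate m False)"
    "length yy = m" "real m / 2 \<le> real (hw yy)" "hw yy \<le> m"
    using bs(3) assms(2) unfolding A_set_def by blast
  have w: "wv m i x = (\<Sum>j<m. bitv (bs!i) j)"
    unfolding wv_def
    by (rule sum.cong) (use bs assms(2) concat_nth_block[of bs "2*m" i] in \<open>auto simp: bitv_def\<close>)
  show "y i \<Longrightarrow> wv m i x = 0"
    unfolding w yy(1) by (simp add: bitv_def nth_append)
  show "\<not> y i \<Longrightarrow> \<exists>k::nat. wv m i x = real k \<and> real m / 2 \<le> real k \<and> k \<le> m"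
  proof -
    assume ny: "\<not> y i"
    have "wv m i x = (\<Sum>j<m. bitv yy j)"
      unfolding w yy(1) using ny yy(2) by (intro sum.cong) (auto simp: bitv_def nth_append)
    also have "\<dots> = real (hw yy)" using count_sum[OF yy(2)] .
    finally show ?thesis using yy by blast
  qed
qed

lemma block_pad:
  assumes "x \<in> prod_blocks m n y" "0 < n" "0 < m"
  shows "\<not> (x!0 \<and> x!m)"
proof -
  obtain bs where bs: "x = concat bs" "length bs = n" "\<forall>i<n. bs!i \<in> A_set m (y i)"
    "\<forall>b\<in>set bs. length b = 2*m"
    using assms(1) by (rule prod_blocksE)
  obtain yy where yy: "bs!0 = (if y 0 then replicate m False @ yy else yy @ replicate m False)"
    "length yy = m"
    using bs(3) assms(2) unfolding A_set_def by blast
  have "x!0 = bs!0!0" using concat_nth_block[of bs "2*m" 0 0] bs assms by simp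
  moreover have "x!m = bs!0!m" using concat_nth_block[of bs "2*m" 0 m] bs assms by simp
  ultimately show ?thesis using yy assms(3) by (auto simp: nth_append)
qed


lemma pad_degree:
  assumes r: "rep N D f" and D: "2 \<le> D" and m: "0 < m" "m + D \<le> N + 1"
  shows "\<exists>a. ml_degree N a = D \<and> (\<forall>x. \<not> (x!0 \<and> x!m) \<longrightarrow> ml_eval N a x = f x)"
proof -
  obtain a0 where a1: "\<forall>S. S \<subseteq> {..<N} \<longrightarrow> a0 S \<noteq> 0 \<longrightarrow> card S \<le> D" and a2: "\<forall>x. ml_eval N a0 x = f x"
    using r by (rule repE)
  define S0 where "S0 = insert 0 {m..<m+D-1}"
  have cS0: "card S0 = D" unfolding S0_def using m D by simp
  have S0N: "S0 \<subseteq> {..<N}" unfolding S0_def using m D by auto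
  have fS0: "finite S0" unfolding S0_def by simp
  have mS0: "0 \<in> S0" "m \<in> S0" unfolding S0_def using D by auto
  define a where "a S = a0 S + (if S = S0 then 1 - a0 S0 else 0)" for S
  have "ml_eval N a x = f x" if "\<not> (x!0 \<and> x!m)" for x
  proof -
    have "ml_eval N a x = ml_eval N a0 x + ml_eval N (\<lambda>S. if S = S0 then 1 - a0 S0 else 0) x"
      unfolding ml_eval_mon a_def by (simp add: distrib_right sum.distrib)
    also have "ml_eval N (\<lambda>S. if S = S0 then 1 - a0 S0 else 0) x = 0"
      unfolding ml_eval_single using mon_eq[OF fS0, of x] mS0 that by auto
    finally show ?thesis using a2 by simp
  qed
  moreover have "ml_degree N a = D"
  proof -
    let ?M = "{card S |S. S \<subseteq> {..<N} \<and> a S \<noteq> 0}"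
    have "?M = (\<lambda>S. card S) ` {S \<in> Pow {..<N}. a S \<noteq> 0}" by auto
    then have fin: "finite ?M" by simp
    have "a S0 = 1" unfolding a_def by simp
    then have inM: "D \<in> ?M" using S0N cS0 by force
    have le: "\<forall>k\<in>?M. k \<le> D"
    proof
      fix k assume "k \<in> ?M"
      then obtain S where S: "k = card S" "S \<subseteq> {..<N}" "a S \<noteq> 0" by blast
      show "k \<le> D"
      proof (cases "S = S0")
        case True then show ?thesis using S cS0 by simp
      next
        case False then have "a0 S \<noteq> 0" using S unfolding a_def by simp
        then show ?thesis using a1 S by blast
      qed
    qed
    show ?thesis unfolding ml_degree_def
      by (rule Max_eqI[OF fin]) (use le inM in auto)
  qed
  ultimately show ?thesis by blast
qed


lemma rep_w: assumes "i < n" shows "rep (2*m*n) 1 (wv m i)"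
proof -
  have "rep (2*m*n) 1 (\<lambda>x. \<Sum>j<m. bitv x (2*m*i + j))"
  proof (rule rep_sum)
    fix j assume "j \<in> {..<m}"
    then have "2*m*i + j < 2*m*(i+1)" by simp
    also have "2*m*(i+1) \<le> 2*m*n" using assms by (intro mult_le_mono2) simp
    finally show "rep (2*m*n) 1 (\<lambda>x. bitv x (2*m*i + j))"
      unfolding bitv_def by (rule rep_var)
  qed simp
  then show ?thesis unfolding wv_def[abs_def] .
qed

lemma X0E:
  assumes "x \<in> X0 m n"
  obtains y where "card {i. i < n \<and> y i} * 2 = n" "x \<in> prod_blocks m n y"
  using assms unfolding X0_def by blast

lemma card_neg: "card {i. i < n \<and> \<not> y i} = n - card {i. i < n \<and> y i}"
proof -
  have "{i. i < n \<and> \<not> y i} = {..<n} - {i. i < n \<and> y i}" by auto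
  moreover have fin: "finite {i. i < n \<and> y i}" by simp
  moreover have "{i. i < n \<and> y i} \<subseteq> {..<n}" by auto
  ultimately show ?thesis by (simp add: card_Diff_subset)
qed

lemma size_bound: "0 < (m::nat) \<Longrightarrow> 0 < n \<Longrightarrow> m + n \<le> 2*m*n"
proof -
  assume "0 < m" "0 < n"
  have "m \<le> m*n" using \<open>0 < n\<close> by (cases n) auto
  moreover have "n \<le> m*n" using \<open>0 < m\<close> by (cases m) auto
  moreover have "2*m*n = m*n + m*n" by simp
  ultimately show ?thesis by linarith
qed

lemma part2:
  assumes mn: "m > 0" "n > 0" "even m" "even n"
  shows "\<exists>a. ml_degree (2*m*n) a = n div 2 + 1 \<and>
            (\<forall>x\<in>X1 m n. ml_eval (2*m*n) a x > 0) \<and>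
            (\<forall>x\<in>X0 m n. ml_eval (2*m*n) a x = 0)"
proof -
  define Fam where "Fam = {S. S \<subseteq> {..<n} \<and> card S = n div 2 + 1}"
  define F where "F x = (\<Sum>S\<in>Fam. \<Prod>i\<in>S. wv m i x)" for x
  have fFam: "finite Fam" unfolding Fam_def by (rule finite_subset[of _ "Pow {..<n}"]) auto
  have "rep (2*m*n) (n div 2 + 1) (\<lambda>x. \<Sum>S\<in>Fam. \<Prod>i\<in>S. wv m i x)"
  proof (rule rep_sum[OF fFam])
    fix S assume S: "S \<in> Fam"
    then have "finite S" unfolding Fam_def by (auto intro: finite_subset)
    then have "rep (2*m*n) (1 * card S) (\<lambda>x. \<Prod>i\<in>S. wv m i x)"
      by (rule rep_prod) (use S rep_w in \<open>auto simp: Fam_def\<close>)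
    then show "rep (2*m*n) (n div 2 + 1) (\<lambda>x. \<Prod>i\<in>S. wv m i x)" using S by (simp add: Fam_def)
  qed
  then have r: "rep (2*m*n) (n div 2 + 1) F" unfolding F_def[abs_def] .
  have "m + (n div 2 + 1) \<le> 2*m*n + 1" using size_bound[OF mn(1,2)] by simp
  moreover have "2 \<le> n div 2 + 1" using mn(2,4) by (auto elim!: evenE)
  ultimately have D: "m + (n div 2 + 1) \<le> 2*m*n + 1" "2 \<le> n div 2 + 1" by auto
  then obtain a where a: "ml_degree (2*m*n) a = n div 2 + 1"
     "\<forall>x. \<not> (x!0 \<and> x!m) \<longrightarrow> ml_eval (2*m*n) a x = F x"
    using pad_degree[OF r _ mn(1)] D by blast
  have "ml_eval (2*m*n) a x > 0" if x: "x \<in> X1 m n" for x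
  proof -
    have xp: "x \<in> prod_blocks m n (\<lambda>_. False)" using x unfolding X1_def .
    have pos: "wv m i x > 0" if i: "i < n" for i
    proof -
      obtain k :: nat where k: "wv m i x = real k" "real m / 2 \<le> real k"
        using block_w(2)[OF xp i] by auto
      then show ?thesis using mn(1) by simp
    qed
    have "{..<n div 2 + 1} \<in> Fam" unfolding Fam_def using mn by auto
    then have "Fam \<noteq> {}" by blast
    moreover have "\<forall>S\<in>Fam. (\<Prod>i\<in>S. wv m i x) > 0"
      unfolding Fam_def using pos by (auto intro!: prod_pos)
    ultimately have "F x > 0" unfolding F_def using fFam by (intro sum_pos) auto
    then show ?thesis using a(2) block_pad[OF xp] mn by simp
  qed
  moreover have "ml_eval (2*m*n) a x = 0" if x: "x \<in> X0 m n" for x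
  proof -
    obtain y where y: "card {i. i < n \<and> y i} * 2 = n" "x \<in> prod_blocks m n y"
      using x by (rule X0E)
    have "(\<Prod>i\<in>S. wv m i x) = 0" if S: "S \<in> Fam" for S
    proof -
      have "\<exists>i\<in>S. y i"
      proof (rule ccontr)
        assume "\<not> (\<exists>i\<in>S. y i)"
        then have "S \<subseteq> {i. i < n \<and> \<not> y i}" using S unfolding Fam_def by auto
        then have "card S \<le> card {i. i < n \<and> \<not> y i}" by (intro card_mono) auto
        also have "\<dots> = n div 2" using card_neg[of n y] y(1) by simp
        finally show False using S unfolding Fam_def by simp
      qed
      then obtain i where i: "i \<in> S" "y i" by blast
      have "i < n" using i S unfolding Fam_def by auto
      then have "wv m i x = 0" using block_w(1)[OF y(2)] i by simp
      moreover have "finite S" using S unfolding Fam_def by (auto intro: finite_subset)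
      ultimately show ?thesis using i by (metis prod_zero)
    qed
    then have "F x = 0" unfolding F_def by simp
    then show ?thesis using a(2) block_pad[OF y(2)] mn by simp
  qed
  ultimately show ?thesis using a(1) by blast
qed


lemma part3:
  assumes mn: "m > 0" "n > 0" "even m" "even n"
  shows "\<exists>a. ml_degree (2*m*n) a = m div 2 + 1 \<and>
            (\<forall>x\<in>X1 m n. ml_eval (2*m*n) a x = real n / 2) \<and>
            (\<forall>x\<in>X0 m n. ml_eval (2*m*n) a x = 0)"
proof -
  obtain q where q: "m = 2*q" using mn(3) by (elim evenE)
  obtain r where rr: "n = 2*r" using mn(4) by (elim evenE)
  define J where "J = {m div 2..m}"
  have cJ: "card J = m div 2 + 1" unfolding J_def q by simp
  define G where "G i x = 1 + (-1) * (\<Prod>j\<in>J. 1 + (-(1/real j)) * wv m i x)" for i x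
  define F where "F x = (\<Sum>i<n. G i x) + (- (real n / 2))" for x
  have rG: "rep (2*m*n) (m div 2 + 1) (G i)" if i: "i < n" for i
  proof -
    have "rep (2*m*n) (1 * card J) (\<lambda>x. \<Prod>j\<in>J. 1 + (-(1/real j)) * wv m i x)"
    proof (rule rep_prod)
      fix j assume "j \<in> J"
      show "rep (2*m*n) 1 (\<lambda>x. 1 + (-(1/real j)) * wv m i x)"
        by (intro rep_add rep_const rep_scale rep_w i)
    qed (simp add: J_def)
    then have "rep (2*m*n) (m div 2 + 1) (\<lambda>x. \<Prod>j\<in>J. 1 + (-(1/real j)) * wv m i x)"
      using cJ by simp
    then have "rep (2*m*n) (m div 2 + 1) (\<lambda>x. 1 + (-1) * (\<Prod>j\<in>J. 1 + (-(1/real j)) * wv m i x))"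
      by (intro rep_add[OF rep_const] rep_scale)
    then show ?thesis unfolding G_def[abs_def] by simp
  qed
  have "rep (2*m*n) (m div 2 + 1) (\<lambda>x. (\<Sum>i<n. G i x) + (- (real n / 2)))"
    by (intro rep_add rep_const rep_sum) (use rG in simp_all)
  then have r: "rep (2*m*n) (m div 2 + 1) F" unfolding F_def[abs_def] .
  have "m + (m div 2 + 1) \<le> 2*m*n + 1"
  proof -
    have "m + m \<le> 2*m*n" using mn(2) by (cases n) auto
    then show ?thesis by simp
  qed
  moreover have "2 \<le> m div 2 + 1" using mn(1) q by auto
  ultimately obtain a where a: "ml_degree (2*m*n) a = m div 2 + 1"
     "\<forall>x. \<not> (x!0 \<and> x!m) \<longrightarrow> ml_eval (2*m*n) a x = F x"
    using pad_degree[OF r _ mn(1)] by blast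
  have G1: "G i x = 1" if h: "x \<in> prod_blocks m n y" "i < n" "\<not> y i" for i x y
  proof -
    obtain k :: nat where k: "wv m i x = real k" "real m / 2 \<le> real k" "k \<le> m"
      using block_w(2)[OF h] by auto
    have kJ: "k \<in> J" unfolding J_def using k q by auto
    have k0: "k > 0" using k(2) mn(1) by (cases k) auto
    have "(\<Prod>j\<in>J. 1 + (-(1/real j)) * wv m i x) = 0"
      using kJ k0 k(1) unfolding J_def by (intro prod_zero) (auto intro!: bexI[of _ k])
    then show ?thesis unfolding G_def by simp
  qed
  have G0: "G i x = 0" if "x \<in> prod_blocks m n y" "i < n" "y i" for i x y
    using block_w(1)[OF that(1,2) that(3)] unfolding G_def by simp
  have "ml_eval (2*m*n) a x = real n / 2" if x: "x \<in> X1 m n" for x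
  proof -
    have xp: "x \<in> prod_blocks m n (\<lambda>_. False)" using x unfolding X1_def .
    have "F x = real n / 2" unfolding F_def using G1[OF xp] by simp
    then show ?thesis using a(2) block_pad[OF xp] mn by simp
  qed
  moreover have "ml_eval (2*m*n) a x = 0" if x: "x \<in> X0 m n" for x
  proof -
    obtain y where y: "card {i. i < n \<and> y i} * 2 = n" "x \<in> prod_blocks m n y"
      using x by (rule X0E)
    have "(\<Sum>i<n. G i x) = (\<Sum>i<n. if \<not> y i then 1 else 0)"
      using G0[OF y(2)] G1[OF y(2)] by (intro sum.cong) auto
    also have "\<dots> = (\<Sum>i\<in>{..<n} \<inter> {i. \<not> y i}. 1)"
      using sum.inter_restrict[of "{..<n}" "\<lambda>_. 1::real" "{i. \<not> y i}"] by simp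
    also have "{..<n} \<inter> {i. \<not> y i} = {i. i < n \<and> \<not> y i}" by auto
    also have "(\<Sum>i\<in>{i. i < n \<and> \<not> y i}. (1::real)) = real (card {i. i < n \<and> \<not> y i})" by simp
    also have "card {i. i < n \<and> \<not> y i} = r" using card_neg[of n y] y(1) rr by simp
    finally have "F x = 0" unfolding F_def using rr by simp
    then show ?thesis using a(2) block_pad[OF y(2)] mn by simp
  qed
  ultimately show ?thesis using a(1) by blast
qed


theorem mainTheorem2:
  fixes m n :: nat
  assumes "m > 0" "n > 0" "even m" "even n"
  shows "(\<exists>a. ml_degree (2*m*n) a = min (n div 2) (m div 2) + 1 \<and>
            (\<forall>x\<in>X1 m n. ml_eval (2*m*n) a x \<noteq> 0) \<and>
            (\<forall>x\<in>X0 m n. ml_eval (2*m*n) a x = 0))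
       \<and> (\<exists>a. ml_degree (2*m*n) a = n div 2 + 1 \<and>
            (\<forall>x\<in>X1 m n. ml_eval (2*m*n) a x > 0) \<and>
            (\<forall>x\<in>X0 m n. ml_eval (2*m*n) a x = 0))
       \<and> (\<exists>a. ml_degree (2*m*n) a = m div 2 + 1 \<and>
            (\<forall>x\<in>X1 m n. ml_eval (2*m*n) a x = real n / 2) \<and>
            (\<forall>x\<in>X0 m n. ml_eval (2*m*n) a x = 0))"
proof -
  have P2: "\<exists>a. ml_degree (2*m*n) a = n div 2 + 1 \<and>
            (\<forall>x\<in>X1 m n. ml_eval (2*m*n) a x > 0) \<and>
            (\<forall>x\<in>X0 m n. ml_eval (2*m*n) a x = 0)" by (rule part2[OF assms])
  have P3: "\<exists>a. ml_degree (2*m*n) a = m div 2 + 1 \<and>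
            (\<forall>x\<in>X1 m n. ml_eval (2*m*n) a x = real n / 2) \<and>
            (\<forall>x\<in>X0 m n. ml_eval (2*m*n) a x = 0)" by (rule part3[OF assms])
  have P1: "\<exists>a. ml_degree (2*m*n) a = min (n div 2) (m div 2) + 1 \<and>
            (\<forall>x\<in>X1 m n. ml_eval (2*m*n) a x \<noteq> 0) \<and>
            (\<forall>x\<in>X0 m n. ml_eval (2*m*n) a x = 0)"
  proof (cases "n div 2 \<le> m div 2")
    case True
    then show ?thesis using P2 by (metis min_def less_irrefl)
  next
    case False
    then have "min (n div 2) (m div 2) = m div 2" by simp
    then show ?thesis using P3 assms(2) by (metis of_nat_0_less_iff half_gt_zero less_irrefl)
  qed
  show ?thesis using P1 P2 P3 by blast
qed

end
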